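(* For $n\ge 1$ let $X_n$ be the random variable with \[ \mathbb{P}(X_n=m)=\frac{[z^{2n}x^m]G(z,x)}{[z^{2n}]G(z,1)}. \] Then $X_n/n$ converges in law, with convergence of all moments, to a random variable $X$ with the $\mathrm{Beta}(2,1)$ distribution, i.e. with density $f_X(x)=2x$ for $x\in[0,1]$ and $0$ otherwise; its moments are $\mathbb{E}(X^r)=\frac{2}{r+2}$.
   Context: A bicolored Dyck path is a finite sequence of steps from $\{U_1,U_2,D\}$ ($U_1,U_2$ raise the height by $1$, $D$ lowers it by $1$) starting and ending at height $0$ and never going below height $0$; its length is its number of steps, and its up-steps are its $U_1$ and $U_2$ steps. For a bicolored Dyck path with exactly one $U_2$ step, its weight is $p$, where the $U_2$ step is the $p$-th step of the path. Let $g_{n,m}$ be the total weight of such paths of length $n$ whose $U_2$ step is the $m$-th up-step, and $G(z,x)=\sum_{n,m}g_{n,m}z^nx^m$. (Equivalently, $X_n$ is the column index of the unique bottom-row cell of a uniformly random tableau with walls and holes of type $(n,n-1,1)$.) *)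

theory Defs
  imports "HOL-Probability.Probability"
begin

datatype step = U1 | U2 | D

fun delta :: "step \<Rightarrow> int" where
  "delta U1 = 1" | "delta U2 = 1" | "delta D = -1"

definition height :: "step list \<Rightarrow> int" where
  "height w = (\<Sum>s\<leftarrow>w. delta s)"

definition dyck :: "step list \<Rightarrow> bool" where
  "dyck w \<longleftrightarrow> height w = 0 \<and> (\<forall>k\<le>length w. height (take k w) \<ge> 0)"

definition is_up :: "step \<Rightarrow> bool" where
  "is_up s \<longleftrightarrow> s = U1 \<or> s = U2"

definition paths :: "nat \<Rightarrow> nat \<Rightarrow> step list set" where
  "paths n m = {w. set w \<subseteq> {U1, U2, D} \<and> length w = n \<and> dyck w
      \<and> length (filter (\<lambda>s. s = U2) w) = 1
      \<and> (\<exists>k<length w. w ! k = U2 \<and> length (filter is_up (take (Suc k) w)) = m)}"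

text \<open>Weight: the (1-based) position p of the U2 step.\<close>
definition weight :: "step list \<Rightarrow> nat" where
  "weight w = Suc (THE k. k < length w \<and> w ! k = U2)"

definition g :: "nat \<Rightarrow> nat \<Rightarrow> nat" where
  "g n m = (\<Sum>w\<in>paths n m. weight w)"

text \<open>Coefficient [z^n] G(z,1) = sum over m of g n m (only m \<le> n contribute).\<close>
definition Gtot :: "nat \<Rightarrow> nat" where
  "Gtot n = (\<Sum>m\<le>n. g n m)"

definition probX :: "nat \<Rightarrow> nat \<Rightarrow> real" where
  "probX n m = real (g (2*n) m) / real (Gtot (2*n))"

definition law_scaled :: "nat \<Rightarrow> real measure" where
  "law_scaled n = distr (density (count_space UNIV) (\<lambda>m. ennreal (probX n m))) borel
                        (\<lambda>m::nat. real m / real n)"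

definition beta21 :: "real measure" where
  "beta21 = density lborel (\<lambda>x. ennreal (2 * x) * indicator {0..1} x)"

end

theory Submission
  imports Defs "HOL-Real_Asymp.Real_Asymp"
begin

definition nU :: "step list \<Rightarrow> nat" where
  "nU w = length (filter (\<lambda>s. s = U1) w)"

definition Wd :: "nat \<Rightarrow> nat \<Rightarrow> step list set" where
  "Wd L c = {w. set w \<subseteq> {U1, D} \<and> length w = L \<and> nU w = c}"

lemma height_Nil[simp]: "height [] = 0" by (simp add: height_def)
lemma height_Cons[simp]: "height (a # w) = delta a + height w" by (simp add: height_def)
lemma height_append[simp]: "height (u @ w) = height u + height w" by (simp add: height_def)
lemma nU_Nil[simp]: "nU [] = 0" by (simp add: nU_def)
lemma nU_Cons[simp]: "nU (a # w) = (if a = U1 then Suc (nU w) else nU w)" by (simp add: nU_def)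
lemma nU_append[simp]: "nU (u @ w) = nU u + nU w" by (simp add: nU_def)

lemma height_nU: "set w \<subseteq> {U1, D} \<Longrightarrow> height w = 2 * int (nU w) - int (length w)"
  by (induction w) auto

lemma nU_le: "nU w \<le> length w" by (simp add: nU_def)

lemma Wd_Suc: "Wd (Suc L) c = (if c = 0 then {} else (Cons U1) ` Wd L (c - 1)) \<union> (Cons D) ` Wd L c"
proof -
  have "w \<in> Wd (Suc L) c \<longleftrightarrow> w \<in> (if c = 0 then {} else (Cons U1) ` Wd L (c - 1)) \<union> (Cons D) ` Wd L c" for w
  proof (cases w)
    case Nil then show ?thesis by (auto simp: Wd_def)
  next
    case (Cons a v) then show ?thesis by (cases a) (auto simp: Wd_def)
  qed
  then show ?thesis by blast
qed

lemma finite_Wd: "finite (Wd L c)"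
proof -
  have "Wd L c \<subseteq> {w. set w \<subseteq> {U1, D} \<and> length w = L}" by (auto simp: Wd_def)
  moreover have "finite {w. set w \<subseteq> {U1, D} \<and> length w = L}"
    by (rule finite_lists_length_eq) simp
  ultimately show ?thesis by (rule finite_subset)
qed

lemma card_Wd: "card (Wd L c) = L choose c"
proof (induction L arbitrary: c)
  case 0
  have "Wd 0 c = (if c = 0 then {[]} else {})" by (auto simp: Wd_def)
  then show ?case by simp
next
  case (Suc L)
  show ?case
  proof (cases c)
    case 0
    then have "Wd (Suc L) c = (Cons D) ` Wd L 0" using Wd_Suc by simp
    then show ?thesis using Suc 0 by (simp add: card_image)
  next
    case (Suc c')
    then have e: "Wd (Suc L) c = (Cons U1) ` Wd L c' \<union> (Cons D) ` Wd L c" using Wd_Suc by simp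
    have "card (Wd (Suc L) c) = card ((Cons U1) ` Wd L c') + card ((Cons D) ` Wd L c)"
      unfolding e by (rule card_Un_disjoint) (auto simp: finite_Wd)
    also have "\<dots> = (L choose c') + (L choose c)" using Suc.IH by (simp add: card_image)
    finally show ?thesis using Suc by simp
  qed
qed

definition DP :: "nat \<Rightarrow> step list set" where
  "DP n = {w. set w \<subseteq> {U1, D} \<and> length w = 2 * n \<and> dyck w}"

lemma height_take_drop: "height (take r w) + height (drop r w) = height w"
  by (metis append_take_drop_id height_append)

lemma rot_dyck:
  assumes h0: "height w = 0" and r: "r < length w"
    and mn: "\<forall>t\<le>length w. height (take r w) \<le> height (take t w)"
  shows "dyck (rotate r w)"
proof -
  let ?L = "length w"
  have rot: "rotate r w = drop r w @ take r w"
    using rotate_drop_take[of r w] r by simp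
  have hd: "height (drop r w) = - height (take r w)" using height_take_drop[of r w] h0 by simp
  have "height (take k (rotate r w)) \<ge> 0" if k: "k \<le> ?L" for k
  proof (cases "k \<le> ?L - r")
    case True
    then have "take k (rotate r w) = take k (drop r w)" unfolding rot by simp
    moreover have "height (take r w) + height (take k (drop r w)) = height (take (r + k) w)"
      by (simp add: take_add)
    moreover have "height (take r w) \<le> height (take (r + k) w)" using mn True r by simp
    ultimately show ?thesis by simp
  next
    case False
    then have "take k (rotate r w) = drop r w @ take (k - (?L - r)) w"
      unfolding rot using r k by (simp add: take_take min_def)
    moreover have "height (take r w) \<le> height (take (k - (?L - r)) w)" using mn[rule_format, of "k - (?L - r)"] k by simp
    ultimately show ?thesis using hd by simp
  qed
  moreover have "height (rotate r w) = 0" unfolding rot using height_take_drop[of r w] h0 by simp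
  ultimately show ?thesis unfolding dyck_def by simp
qed

lemma ex_rot:
  assumes "height w = 0" "w \<noteq> []"
  shows "\<exists>r. r < length w \<and> (\<forall>t\<le>length w. height (take r w) \<le> height (take t w))"
proof -
  let ?f = "\<lambda>t. height (take t w)"
  let ?m = "Min (?f ` {0..length w})"
  have "?m \<in> ?f ` {0..length w}" by (rule Min_in) auto
  then obtain t0 where t0': "t0 \<in> {0..length w}" and t0e: "?m = ?f t0" by (rule imageE)
  then have t0: "t0 \<le> length w" "?f t0 = ?m" by auto
  have le: "\<forall>t\<le>length w. ?m \<le> ?f t" by (auto intro: Min_le)
  show ?thesis
  proof (cases "t0 = length w")
    case True
    have "?f 0 = ?m" using t0 True assms by simp
    then show ?thesis using le assms by (intro exI[of _ 0]) auto
  next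
    case False
    then show ?thesis using le t0 by (intro exI[of _ t0]) auto
  qed
qed

lemma finite_DP: "finite (DP n)"
proof -
  have "DP n \<subseteq> {w. set w \<subseteq> {U1, D} \<and> length w = 2 * n}" by (auto simp: DP_def)
  moreover have "finite {w. set w \<subseteq> {U1, D} \<and> length w = 2 * n}"
    by (rule finite_lists_length_eq) simp
  ultimately show ?thesis by (rule finite_subset)
qed

lemma DP_nU: "w \<in> DP n \<Longrightarrow> nU w = n"
  using height_nU[of w] by (auto simp: DP_def dyck_def)

lemma DP_sub_Wd: "DP n \<subseteq> Wd (2 * n) n"
  using DP_nU by (auto simp: DP_def Wd_def)

lemma cycle_bound:
  assumes "n \<ge> 1"
  shows "(2 * n choose n) \<le> 2 * n * card (DP n)"
proof -
  define rr where "rr w = (SOME r. r < length w \<and> (\<forall>t\<le>length w. height (take r w) \<le> height (take t w)))" for w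
  have rr: "rr w < length w \<and> (\<forall>t\<le>length w. height (take (rr w) w) \<le> height (take t w))"
    if "w \<in> Wd (2 * n) n" for w
  proof -
    have "height w = 0" "w \<noteq> []" using that height_nU[of w] assms by (auto simp: Wd_def)
    then show ?thesis unfolding rr_def by (rule someI_ex[OF ex_rot])
  qed
  define phi where "phi w = (rr w, rotate (rr w) w)" for w
  have "inj_on phi (Wd (2 * n) n)"
  proof (rule inj_onI)
    fix w w' assume w: "w \<in> Wd (2 * n) n" and w': "w' \<in> Wd (2 * n) n" and e: "phi w = phi w'"
    then have e1: "rr w = rr w'" and e2: "rotate (rr w) w = rotate (rr w) w'" by (auto simp: phi_def)
    have l: "length w = 2 * n" "length w' = 2 * n" using w w' by (auto simp: Wd_def)
    have "rotate (2 * n - rr w) (rotate (rr w) w) = rotate (2 * n - rr w) (rotate (rr w) w')" using e2 by simp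
    then show "w = w'" using rr[OF w] l by (simp add: rotate_rotate)
  qed
  moreover have "phi ` Wd (2 * n) n \<subseteq> {..<2 * n} \<times> DP n"
  proof
    fix x assume "x \<in> phi ` Wd (2 * n) n"
    then obtain w where w: "w \<in> Wd (2 * n) n" and x: "x = phi w" by auto
    have "height w = 0" using w height_nU[of w] by (auto simp: Wd_def)
    then have "dyck (rotate (rr w) w)" using rr[OF w] by (intro rot_dyck) auto
    then show "x \<in> {..<2 * n} \<times> DP n" using x w rr[OF w] by (auto simp: phi_def DP_def Wd_def)
  qed
  ultimately have "card (Wd (2 * n) n) \<le> card ({..<2 * n} \<times> DP n)"
    by (intro card_inj_on_le) (auto simp: finite_DP)
  then show ?thesis by (simp add: card_Wd card_cartesian_product)
qed

definition sel :: "step list \<Rightarrow> nat \<Rightarrow> nat" where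
  "sel v j = (THE k. k < length v \<and> v ! k = U1 \<and> nU (take k v) = j)"

lemma nU_take_strict:
  assumes "k1 < k2" "k1 < length v" "v ! k1 = U1"
  shows "nU (take k1 v) < nU (take k2 v)"
proof -
  have "take k2 v = take k1 v @ take (k2 - k1) (drop k1 v)"
    using assms(1) by (metis le_add_diff_inverse less_imp_le take_add)
  moreover have "drop k1 v = U1 # drop (Suc k1) v" using assms by (metis Cons_nth_drop_Suc)
  moreover obtain d where "k2 - k1 = Suc d" using assms(1) by (metis Suc_diff_Suc)
  ultimately show ?thesis by simp
qed

lemma sel_exists: "j < nU v \<Longrightarrow> \<exists>k<length v. v ! k = U1 \<and> nU (take k v) = j"
proof (induction v arbitrary: j)
  case Nil then show ?case by simp
next
  case (Cons a v)
  show ?case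
  proof (cases "a = U1 \<and> j = 0")
    case True then show ?thesis by (intro exI[of _ 0]) auto
  next
    case False
    define j' where "j' = (if a = U1 then j - 1 else j)"
    have "j' < nU v" using Cons.prems False by (auto simp: j'_def split: if_splits)
    then obtain k' where k': "k' < length v" "v ! k' = U1" "nU (take k' v) = j'" using Cons.IH by blast
    show ?thesis using k' False by (intro exI[of _ "Suc k'"]) (auto simp: j'_def)
  qed
qed

lemma sel_unique:
  assumes "k < length v" "v ! k = U1" "nU (take k v) = j"
  shows "sel v j = k"
  unfolding sel_def
proof (rule the_equality)
  show "k < length v \<and> v ! k = U1 \<and> nU (take k v) = j" using assms by simp
  fix k' assume k': "k' < length v \<and> v ! k' = U1 \<and> nU (take k' v) = j"
  show "k' = k"
  proof (rule ccontr)
    assume "k' \<noteq> k"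
    then have "k' < k \<or> k < k'" by auto
    then show False using nU_take_strict[of k' k v] nU_take_strict[of k k' v] k' assms by auto
  qed
qed

lemma sel_props:
  assumes "j < nU v"
  shows "sel v j < length v \<and> v ! sel v j = U1 \<and> nU (take (sel v j) v) = j"
proof -
  obtain k where "k < length v" "v ! k = U1" "nU (take k v) = j" using sel_exists[OF assms] by blast
  then show ?thesis using sel_unique by simp
qed

definition unc :: "step \<Rightarrow> step" where
  "unc s = (if s = U2 then U1 else s)"

lemma delta_unc[simp]: "delta (unc s) = delta s" by (cases s) (auto simp: unc_def)

lemma height_map_unc[simp]: "height (map unc w) = height w"
  by (induction w) auto

lemma dyck_map_unc: "dyck (map unc w) = dyck w"
  by (simp add: dyck_def take_map)

lemma is_up_unc: "is_up s \<longleftrightarrow> unc s = U1" by (cases s) (auto simp: is_up_def unc_def)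

lemma filter_is_up_nU: "length (filter is_up u) = nU (map unc u)"
  by (induction u) (auto simp: is_up_unc)

lemma nU_lt_nU:
  assumes "k < length v" "v ! k = U1"
  shows "nU (take k v) < nU v"
  using nU_take_strict[of k "length v" v] assms by simp

lemma map_unc_id: "set v \<subseteq> {U1, D} \<Longrightarrow> map unc v = v"
  by (induction v) (auto simp: unc_def)

lemma upd_facts:
  assumes v: "set v \<subseteq> {U1, D}" and k: "k < length v" "v ! k = U1"
  shows "map unc (v[k := U2]) = v"
    and "length (filter (\<lambda>s. s = U2) (v[k := U2])) = 1"
    and "weight (v[k := U2]) = Suc k"
    and "length (filter is_up (take (Suc k) (v[k := U2]))) = Suc (nU (take k v))"
proof -
  show "map unc (v[k := U2]) = v"
    using k map_unc_id[OF v] by (metis list_update_id map_update unc_def)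
  have e: "v[k := U2] = take k v @ U2 # drop (Suc k) v" using k by (simp add: upd_conv_take_nth_drop)
  have n1: "U2 \<notin> set (take k v)" "U2 \<notin> set (drop (Suc k) v)"
    using v by (auto dest: in_set_takeD in_set_dropD)
  then have "filter (\<lambda>s. s = U2) (take k v) = []" "filter (\<lambda>s. s = U2) (drop (Suc k) v) = []"
    by (auto simp: filter_empty_conv)
  then show "length (filter (\<lambda>s. s = U2) (v[k := U2])) = 1" unfolding e by simp
  have "(THE k'. k' < length (v[k := U2]) \<and> v[k := U2] ! k' = U2) = k"
  proof (rule the_equality)
    show "k < length (v[k := U2]) \<and> v[k := U2] ! k = U2" using k by simp
    fix k' assume "k' < length (v[k := U2]) \<and> v[k := U2] ! k' = U2"
    then show "k' = k" using v by (cases "k' = k") (auto dest!: nth_mem)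
  qed
  then show "weight (v[k := U2]) = Suc k" by (simp add: weight_def)
  have "take (Suc k) (v[k := U2]) = take k v @ [U2]" unfolding e using k by (simp add: min_def)
  moreover have "set (take k v) \<subseteq> {U1, D}" using v by (meson order_trans set_take_subset)
  ultimately show "length (filter is_up (take (Suc k) (v[k := U2]))) = Suc (nU (take k v))"
    using map_unc_id[of "take k v"] filter_is_up_nU[of "take k v"]
    by (simp add: is_up_def)
qed

lemma paths_char:
  "w \<in> paths (2 * n) m \<longleftrightarrow> (1 \<le> m \<and> m \<le> n \<and> (\<exists>v\<in>DP n. w = v[sel v (m - 1) := U2]))"
proof
  assume w: "w \<in> paths (2 * n) m"
  define v where "v = map unc w"
  have sv: "set v \<subseteq> {U1, D}" by (auto simp: v_def unc_def) (metis step.exhaust)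
  have vD: "v \<in> DP n" using w sv by (auto simp: paths_def DP_def v_def dyck_map_unc)
  obtain k where k: "k < length w" "w ! k = U2" "length (filter is_up (take (Suc k) w)) = m"
    using w by (auto simp: paths_def)
  have one: "length (filter (\<lambda>s. s = U2) w) = 1" using w by (auto simp: paths_def)
  have only: "w ! i \<noteq> U2" if "i < length w" "i \<noteq> k" for i
  proof
    assume "w ! i = U2"
    then have "{i, k} \<subseteq> {i. i < length w \<and> w ! i = U2}" using k that by auto
    then have "card {i, k} \<le> card {i. i < length w \<and> w ! i = U2}" by (intro card_mono) auto
    also have "\<dots> = 1" using one by (simp add: length_filter_conv_card)
    finally show False using that by simp
  qed
  have wv: "w = v[k := U2]"
  proof (rule nth_equalityI)
    show "length w = length (v[k := U2])" by (simp add: v_def)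
    fix i assume "i < length w"
    then show "w ! i = v[k := U2] ! i" using only k by (cases "i = k") (auto simp: v_def unc_def)
  qed
  have vk: "v ! k = U1" "k < length v" using k by (auto simp: v_def unc_def)
  have "length (filter is_up (take (Suc k) w)) = Suc (nU (take k v))"
    using upd_facts(4)[OF sv vk(2) vk(1)] wv by simp
  then have m: "m = Suc (nU (take k v))" using k by simp
  have "nU (take k v) < n" using nU_lt_nU[OF vk(2) vk(1)] DP_nU[OF vD] by simp
  moreover have "sel v (m - 1) = k" using m vk by (intro sel_unique) auto
  ultimately show "1 \<le> m \<and> m \<le> n \<and> (\<exists>v\<in>DP n. w = v[sel v (m - 1) := U2])"
    using m vD wv by (intro conjI) (auto intro!: bexI[of _ v])
next
  assume "1 \<le> m \<and> m \<le> n \<and> (\<exists>v\<in>DP n. w = v[sel v (m - 1) := U2])"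
  then obtain v where m: "1 \<le> m" "m \<le> n" and vD: "v \<in> DP n" and w: "w = v[sel v (m - 1) := U2]" by blast
  have sv: "set v \<subseteq> {U1, D}" and lv: "length v = 2 * n" and dv: "dyck v" using vD by (auto simp: DP_def)
  have "m - 1 < nU v" using m DP_nU[OF vD] by simp
  note sp = sel_props[OF this]
  note uf = upd_facts[OF sv sp[THEN conjunct1] sp[THEN conjunct2, THEN conjunct1]]
  have "dyck w" using uf(1) dv w dyck_map_unc by metis
  moreover have "set w \<subseteq> {U1, U2, D}" using sv w by (auto dest!: set_update_subset_insert[THEN subsetD])
  ultimately show "w \<in> paths (2 * n) m"
    unfolding paths_def using uf(2,4) sp w lv m by (auto intro!: exI[of _ "sel v (m - 1)"])
qed

lemma g_formula:
  "g (2 * n) m = (if 1 \<le> m \<and> m \<le> n then (\<Sum>v\<in>DP n. Suc (sel v (m - 1))) else 0)"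
proof (cases "1 \<le> m \<and> m \<le> n")
  case True
  let ?f = "\<lambda>v. v[sel v (m - 1) := U2]"
  have P: "paths (2 * n) m = ?f ` DP n" using True paths_char by blast
  have props: "sel v (m - 1) < length v \<and> v ! sel v (m - 1) = U1 \<and> set v \<subseteq> {U1, D}" if "v \<in> DP n" for v
    using sel_props[of "m - 1" v] DP_nU[OF that] True that by (auto simp: DP_def)
  have "inj_on ?f (DP n)"
  proof (rule inj_onI)
    fix v v' assume "v \<in> DP n" "v' \<in> DP n" "?f v = ?f v'"
    then show "v = v'" using upd_facts(1) props by metis
  qed
  then have "g (2 * n) m = (\<Sum>v\<in>DP n. weight (?f v))" unfolding g_def P by (simp add: sum.reindex)
  also have "\<dots> = (\<Sum>v\<in>DP n. Suc (sel v (m - 1)))"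
    by (rule sum.cong) (use props upd_facts(3) in auto)
  finally show ?thesis using True by simp
next
  case False
  then have "paths (2 * n) m = {}" using paths_char by blast
  then show ?thesis using False by (simp only: g_def if_False sum.empty)
qed

definition hh :: "step list \<Rightarrow> nat \<Rightarrow> int" where
  "hh v j = height (take (sel v j) v)"

definition AA :: "nat \<Rightarrow> nat \<Rightarrow> int" where
  "AA n M = (\<Sum>v\<in>DP n. \<Sum>j<M. hh v j)"

definition bad :: "nat \<Rightarrow> nat \<Rightarrow> nat" where
  "bad n k = card {v\<in>DP n. \<exists>t\<le>2 * n. height (take t v) \<ge> int k}"

lemma hh_props:
  assumes v: "v \<in> DP n" and j: "j < n"
  shows "int (Suc (sel v j)) = 2 * int j + 1 - hh v j" "0 \<le> hh v j" "hh v j \<le> int j" "sel v j \<le> 2 * n"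
proof -
  have jn: "j < nU v" using DP_nU[OF v] j by simp
  note sp = sel_props[OF jn]
  have sv: "set v \<subseteq> {U1, D}" and lv: "length v = 2 * n" and dv: "dyck v" using v by (auto simp: DP_def)
  have st: "set (take (sel v j) v) \<subseteq> {U1, D}" using sv by (meson order_trans set_take_subset)
  have e: "hh v j = 2 * int j - int (sel v j)"
    unfolding hh_def using height_nU[OF st] sp by simp
  then show "int (Suc (sel v j)) = 2 * int j + 1 - hh v j" by simp
  show "0 \<le> hh v j" unfolding hh_def using dv sp lv by (auto simp: dyck_def)
  have "nU (take (sel v j) v) \<le> length (take (sel v j) v)" by (rule nU_le)
  then show "hh v j \<le> int j" using e sp by simp
  show "sel v j \<le> 2 * n" using sp lv by simp
qed

lemma sum_odd: "(\<Sum>j<M. 2 * int j + 1) = int M ^ 2"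
  by (induction M) (auto simp: power2_eq_square algebra_simps)

lemma S_formula:
  assumes "M \<le> n"
  shows "int (\<Sum>m\<le>M. g (2 * n) m) = int M ^ 2 * int (card (DP n)) - AA n M"
proof -
  have "int (\<Sum>m\<le>M. g (2 * n) m) = (\<Sum>v\<in>DP n. \<Sum>j<M. int (Suc (sel v j)))" using assms
  proof (induction M)
    case 0 then show ?case by (simp add: g_formula)
  next
    case (Suc M)
    have "int (\<Sum>m\<le>Suc M. g (2 * n) m) = int (\<Sum>m\<le>M. g (2 * n) m) + int (g (2 * n) (Suc M))" by simp
    also have "\<dots> = (\<Sum>v\<in>DP n. \<Sum>j<M. int (Suc (sel v j))) + (\<Sum>v\<in>DP n. int (Suc (sel v M)))"
      proof -
      have "g (2 * n) (Suc M) = (\<Sum>v\<in>DP n. Suc (sel v M))" using g_formula[of n "Suc M"] Suc.prems by simp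
      then show ?thesis using Suc by (simp only: of_nat_sum of_nat_add)
    qed
    also have "\<dots> = (\<Sum>v\<in>DP n. \<Sum>j<Suc M. int (Suc (sel v j)))" by (simp only: sum.distrib[symmetric] sum.lessThan_Suc)
    finally show ?case .
  qed
  also have "\<dots> = (\<Sum>v\<in>DP n. \<Sum>j<M. 2 * int j + 1 - hh v j)"
    using assms hh_props(1) by (intro sum.cong refl) auto
  also have "\<dots> = (\<Sum>v\<in>DP n. int M ^ 2 - (\<Sum>j<M. hh v j))"
    by (simp add: sum_subtractf sum_odd)
  also have "\<dots> = int M ^ 2 * int (card (DP n)) - AA n M"
    by (simp add: sum_subtractf AA_def algebra_simps)
  finally show ?thesis .
qed

lemma Gtot_formula: "Gtot (2 * n) = (\<Sum>m\<le>n. g (2 * n) m)"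
proof -
  have "(\<Sum>m\<le>2 * n. g (2 * n) m) = (\<Sum>m\<le>n. g (2 * n) m)"
    by (rule sum.mono_neutral_right) (auto simp: g_formula)
  then show ?thesis by (simp add: Gtot_def)
qed

lemma AA_nonneg: "0 \<le> AA n M" if "M \<le> n"
  unfolding AA_def using that hh_props(2) by (intro sum_nonneg) auto

lemma AA_mono: "AA n M \<le> AA n M'" if "M \<le> M'" "M' \<le> n"
  unfolding AA_def
proof (intro sum_mono)
  fix v assume v: "v \<in> DP n"
  show "(\<Sum>j<M. hh v j) \<le> (\<Sum>j<M'. hh v j)"
    by (rule sum_mono2) (use that hh_props(2)[OF v] in auto)
qed

lemma AA_bound: "AA n n \<le> int n * int k * int (card (DP n)) + int n * int n * int (bad n k)"
proof -
  let ?b = "\<lambda>v. \<exists>t\<le>2 * n. height (take t v) \<ge> int k"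
  have "AA n n \<le> (\<Sum>v\<in>DP n. int n * int k + (if ?b v then int n * int n else 0))"
    unfolding AA_def
  proof (intro sum_mono)
    fix v assume v: "v \<in> DP n"
    show "(\<Sum>j<n. hh v j) \<le> int n * int k + (if ?b v then int n * int n else 0)"
    proof (cases "?b v")
      case True
      have "(\<Sum>j<n. hh v j) \<le> (\<Sum>j<n. int n)" using hh_props(3)[OF v] by (intro sum_mono) force
      then have "(\<Sum>j<n. hh v j) \<le> int n * int n" by simp
      moreover have "0 \<le> int n * int k" by simp
      ultimately show ?thesis using True by (simp only: if_True)
    next
      case False
      have "hh v j \<le> int k" if "j < n" for j
        using False hh_props(4)[OF v that] unfolding hh_def by force
      then have "(\<Sum>j<n. hh v j) \<le> (\<Sum>j<n. int k)" by (intro sum_mono) auto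
      then show ?thesis by (simp only: if_not_P[OF False]) simp
    qed
  qed
  also have "\<dots> = int n * int k * int (card (DP n)) + int n * int n * int (bad n k)"
    unfolding bad_def sum.distrib
    by (simp add: sum.inter_filter[symmetric] finite_DP)
  finally show ?thesis .
qed

lemma height_le_nU: "set w \<subseteq> {U1, D} \<Longrightarrow> height w \<le> int (nU w)"
  using height_nU[of w] nU_le[of w] by simp

lemma set_take_sub: "set w \<subseteq> A \<Longrightarrow> set (take t w) \<subseteq> A"
  by (meson order_trans set_take_subset)
lemma set_drop_sub: "set w \<subseteq> A \<Longrightarrow> set (drop t w) \<subseteq> A"
  by (meson order_trans set_drop_subset)

lemma card_through:
  assumes t: "t \<le> 2 * n" and j: "j \<le> n"
  shows "card {v\<in>Wd (2 * n) n. height (take t v) = int j} \<le> (2 * n) choose (n - j)"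
proof (cases "{v\<in>Wd (2 * n) n. height (take t v) = int j} = {}")
  case True then show ?thesis by (metis card.empty zero_le)
next
  case False
  let ?S = "{v\<in>Wd (2 * n) n. height (take t v) = int j}"
  define u where "u = (t + j) div 2"
  have key: "nU (take t v) = u \<and> nU (drop t v) = n - u \<and> u \<le> n" if "v \<in> ?S" for v
  proof -
    have sv: "set v \<subseteq> {U1, D}" "length v = 2 * n" "nU v = n" "height (take t v) = int j"
      using that by (auto simp: Wd_def)
    have "height (take t v) = 2 * int (nU (take t v)) - int t"
      using height_nU[OF set_take_sub[OF sv(1)]] sv(2) t by simp
    then have "2 * nU (take t v) = t + j" using sv(4) by linarith
    then have a: "nU (take t v) = u" unfolding u_def by simp
    have "nU v = nU (take t v) + nU (drop t v)" by (metis append_take_drop_id nU_append)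
    then show ?thesis using a sv by simp
  qed
  obtain v0 where v0: "v0 \<in> ?S" using False by blast
  have ineq: "u \<le> n" "2 * u = t + j" "j \<le> u"
  proof -
    show "u \<le> n" using key[OF v0] by simp
    have sv: "set v0 \<subseteq> {U1, D}" "length v0 = 2 * n" "height (take t v0) = int j"
      using v0 by (auto simp: Wd_def)
    have "height (take t v0) = 2 * int (nU (take t v0)) - int t"
      using height_nU[OF set_take_sub[OF sv(1)]] sv(2) t by simp
    then show "2 * u = t + j" using sv(3) key[OF v0] by linarith
    have "height (take t v0) \<le> int (nU (take t v0))" by (rule height_le_nU[OF set_take_sub[OF sv(1)]])
    then show "j \<le> u" using sv(3) key[OF v0] by linarith
  qed
  have "inj_on (\<lambda>v. (take t v, drop t v)) ?S"
    by (rule inj_onI) (metis append_take_drop_id prod.inject)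
  moreover have "(\<lambda>v. (take t v, drop t v)) ` ?S \<subseteq> Wd t u \<times> Wd (2 * n - t) (n - u)"
  proof
    fix x assume "x \<in> (\<lambda>v. (take t v, drop t v)) ` ?S"
    then obtain v where v: "v \<in> ?S" and x: "x = (take t v, drop t v)" by auto
    then have "set v \<subseteq> {U1, D}" "length v = 2 * n" by (auto simp: Wd_def)
    then show "x \<in> Wd t u \<times> Wd (2 * n - t) (n - u)"
      using key[OF v] x t by (auto simp: Wd_def set_take_sub set_drop_sub)
  qed
  ultimately have "card ?S \<le> card (Wd t u \<times> Wd (2 * n - t) (n - u))"
    by (intro card_inj_on_le) (auto simp: finite_Wd)
  also have "\<dots> = (t choose u) * ((2 * n - t) choose (n - u))"
    by (simp add: card_cartesian_product card_Wd)
  also have "\<dots> = (t choose (t - u)) * ((2 * n - t) choose ((n - j) - (t - u)))"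
  proof -
    have "t choose u = t choose (t - u)" using ineq by (intro binomial_symmetric) linarith
    moreover have "(n - j) - (t - u) = n - u" using ineq by linarith
    ultimately show ?thesis by simp
  qed
  also have "\<dots> \<le> (\<Sum>i\<le>n - j. (t choose i) * ((2 * n - t) choose ((n - j) - i)))"
    using ineq by (intro member_le_sum) auto
  also have "\<dots> = (t + (2 * n - t)) choose (n - j)" by (rule vandermonde)
  finally show ?thesis using t by simp
qed

lemma binom_exp:
  assumes "n \<ge> 1" "j \<le> n"
  shows "real ((2 * n) choose (n - j)) \<le> real ((2 * n) choose n) * exp (- (real j ^ 2) / (2 * real n))"
  using assms(2)
proof (induction j)
  case 0 then show ?case by simp
next
  case (Suc j)
  let ?N = "2 * n"
  have IH: "real (?N choose (n - j)) \<le> real (?N choose n) * exp (- (real j ^ 2) / (2 * real n))"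
    using Suc by simp
  have rec: "(n + j + 1) * (?N choose (n - Suc j)) = (n - j) * (?N choose (n - j))"
  proof -
    have a: "Suc (n - Suc j) * (?N choose Suc (n - Suc j)) = ?N * ((?N - 1) choose (n - Suc j))"
      by (rule binomial_absorption)
    have b: "(?N - (n - Suc j)) * (?N choose (n - Suc j)) = ?N * ((?N - 1) choose (n - Suc j))"
      by (rule binomial_absorb_comp)
    have "Suc (n - Suc j) = n - j" "?N - (n - Suc j) = n + j + 1" using Suc.prems by auto
    then show ?thesis using a b by simp
  qed
  then have r: "real (?N choose (n - Suc j)) = real (n - j) / real (n + j + 1) * real (?N choose (n - j))"
  proof -
    have "real (n + j + 1) * real (?N choose (n - Suc j)) = real (n - j) * real (?N choose (n - j))"
      using rec by (metis of_nat_mult)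
    moreover have "real (n + j + 1) > 0" by simp
    ultimately show ?thesis by (simp add: field_simps)
  qed
  define y where "y = (2 * real j + 1) / (2 * real n)"
  have ypos: "0 \<le> y" unfolding y_def by simp
  have f: "real (n - j) / real (n + j + 1) \<le> exp (- y)"
  proof -
    have "1 + (- y) \<le> exp (- y)" by (rule exp_ge_add_one_self)
    moreover have "real (n - j) / real (n + j + 1) \<le> 1 - y"
    proof -
      have jn: "real j + 1 \<le> real n" using Suc.prems by simp
      have nj: "real (n - j) = real n - real j" using Suc.prems by simp
      have e0: "1 - y = (2 * real n - 2 * real j - 1) / (2 * real n)" unfolding y_def using assms by (simp add: field_simps)
      have e1: "(real n - real j) * (2 * real n) = 2*real n*real n - 2*real n*real j" by (simp add: algebra_simps)
      have e2: "(2 * real n - 2 * real j - 1) * (real n + real j + 1) = 2*real n*real n + real n - 2*real j*real j - 3*real j - 1" by (simp add: algebra_simps)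
      have p: "(2 * real j + 1) * (real j + 1) \<le> (2 * real j + 1) * real n" using jn by (intro mult_left_mono) auto
      have "(real n - real j) * (2 * real n) \<le> (2 * real n - 2 * real j - 1) * (real n + real j + 1)"
        unfolding e1 e2 using p by (simp add: algebra_simps)
      moreover have "0 < real n + real j + 1" "0 < 2 * real n" using assms by auto
      ultimately have "(real n - real j) / (real n + real j + 1) \<le> (2 * real n - 2 * real j - 1) / (2 * real n)"
        by (simp add: divide_simps)
      moreover have "real (n + j + 1) = real n + real j + 1" by simp
      ultimately show ?thesis using nj e0 by metis
    qed
    ultimately show ?thesis by linarith
  qed
  have "real (?N choose (n - Suc j)) \<le> exp (- y) * (real (?N choose n) * exp (- (real j ^ 2) / (2 * real n)))"
    unfolding r by (rule mult_mono[OF f IH]) auto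
  also have "\<dots> = real (?N choose n) * exp (- (real (Suc j) ^ 2) / (2 * real n))"
  proof -
    have "- y + - (real j ^ 2) / (2 * real n) = - (real (Suc j) ^ 2) / (2 * real n)"
      unfolding y_def using assms by (simp add: field_simps power2_eq_square)
    then show ?thesis by (simp add: exp_add[symmetric] algebra_simps)
  qed
  finally show ?case .
qed

lemma nU_take_le: "nU (take t v) \<le> nU v"
  by (metis append_take_drop_id le_add1 nU_append)

lemma bad_bound:
  assumes n: "n \<ge> 1"
  shows "real (bad n k) \<le> real (2 * n + 1) * real (n + 1) * real ((2 * n) choose n) * exp (- (real k ^ 2) / (2 * real n))"
proof -
  let ?S = "\<lambda>t j. {v\<in>Wd (2 * n) n. height (take t v) = int j}"
  let ?B = "{v\<in>DP n. \<exists>t\<le>2 * n. height (take t v) \<ge> int k}"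
  let ?E = "exp (- (real k ^ 2) / (2 * real n))"
  have sub: "?B \<subseteq> (\<Union>t\<in>{..2 * n}. \<Union>j\<in>{k..n}. ?S t j)"
  proof
    fix v assume "v \<in> ?B"
    then obtain t where v: "v \<in> DP n" and t: "t \<le> 2 * n" and h: "height (take t v) \<ge> int k" by auto
    have sv: "set v \<subseteq> {U1, D}" using v by (auto simp: DP_def)
    have "height (take t v) \<le> int (nU (take t v))" by (rule height_le_nU[OF set_take_sub[OF sv]])
    also have "\<dots> \<le> int n" using nU_take_le[of t v] DP_nU[OF v] by simp
    finally have hn: "height (take t v) \<le> int n" .
    define j where "j = nat (height (take t v))"
    have hj: "height (take t v) = int j" using h unfolding j_def by simp
    have kj: "k \<le> j" using h unfolding j_def by linarith
    have jn: "j \<le> n" using hn unfolding j_def by linarith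
    have "v \<in> Wd (2 * n) n" using DP_sub_Wd[of n] v by blast
    then have "v \<in> ?S t j" using hj by simp
    moreover have "j \<in> {k..n}" using kj jn by simp
    moreover have "t \<in> {..2 * n}" using t by simp
    ultimately show "v \<in> (\<Union>t\<in>{..2 * n}. \<Union>j\<in>{k..n}. ?S t j)"
      by (intro UN_I)
  qed
  have fin: "finite (?S t j)" for t j by (simp add: finite_Wd)
  have "bad n k \<le> card (\<Union>t\<in>{..2 * n}. \<Union>j\<in>{k..n}. ?S t j)"
    unfolding bad_def by (rule card_mono[OF _ sub]) (simp add: fin)
  also have "\<dots> \<le> (\<Sum>t\<in>{..2 * n}. card (\<Union>j\<in>{k..n}. ?S t j))" by (rule card_UN_le) auto
  also have "\<dots> \<le> (\<Sum>t\<in>{..2 * n}. \<Sum>j\<in>{k..n}. card (?S t j))"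
    by (intro sum_mono card_UN_le) auto
  finally have b1: "real (bad n k) \<le> (\<Sum>t\<in>{..2 * n}. \<Sum>j\<in>{k..n}. real (card (?S t j)))"
    by (simp only: of_nat_sum[symmetric] of_nat_le_iff)
  also have "\<dots> \<le> (\<Sum>t\<in>{..2 * n}. \<Sum>j\<in>{k..n}. real ((2 * n) choose n) * ?E)"
  proof (intro sum_mono)
    fix t j assume t: "t \<in> {..2 * n}" and j: "j \<in> {k..n}"
    have "real (card (?S t j)) \<le> real ((2 * n) choose (n - j))" using card_through[of t n j] t j by simp
    also have "\<dots> \<le> real ((2 * n) choose n) * exp (- (real j ^ 2) / (2 * real n))" using binom_exp[OF n, of j] j by simp
    also have "\<dots> \<le> real ((2 * n) choose n) * ?E"
    proof (intro mult_left_mono)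
      have "real k ^ 2 \<le> real j ^ 2" using j by (intro power_mono) auto
      then have "- (real j ^ 2) / (2 * real n) \<le> - (real k ^ 2) / (2 * real n)" using n by (simp add: divide_right_mono)
      then show "exp (- (real j ^ 2) / (2 * real n)) \<le> ?E" by simp
    qed simp
    finally show "real (card (?S t j)) \<le> real ((2 * n) choose n) * ?E" .
  qed
  also have "\<dots> = real (2 * n + 1) * real (card {k..n}) * (real ((2 * n) choose n) * ?E)" by simp
  also have "\<dots> \<le> real (2 * n + 1) * real (n + 1) * (real ((2 * n) choose n) * ?E)"
    by (intro mult_right_mono mult_left_mono) auto
  finally show ?thesis by (simp only: mult.assoc)
qed

lemma DP_pos: "n \<ge> 1 \<Longrightarrow> card (DP n) > 0"
  using cycle_bound[of n] by (metis mult_0_right not_gr0 zero_less_binomial_iff le_0_eq le_add2 mult_2 not_one_le_zero)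

lemma ratio_bound:
  assumes n: "n \<ge> 1"
  shows "real_of_int (AA n n) / (real n ^ 2 * real (card (DP n)))
    \<le> real k / real n + 2 * real n * (2 * real n + 1) * (real n + 1) * exp (- (real k ^ 2) / (2 * real n))"
proof -
  let ?E = "exp (- (real k ^ 2) / (2 * real n))"
  let ?d = "real (card (DP n))"
  have dpos: "?d > 0" using DP_pos[OF n] by simp
  have c: "real ((2 * n) choose n) \<le> 2 * real n * ?d" using cycle_bound[OF n] by (metis of_nat_le_iff of_nat_mult of_nat_numeral)
  have "real_of_int (AA n n) \<le> real n * real k * ?d + real n * real n * real (bad n k)"
  proof -
    have "real_of_int (AA n n) \<le> real_of_int (int n * int k * int (card (DP n)) + int n * int n * int (bad n k))"
      using AA_bound[of n k] by (simp only: of_int_le_iff)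
    then show ?thesis by simp
  qed
  also have "\<dots> \<le> real n * real k * ?d + real n * real n * (real (2 * n + 1) * real (n + 1) * (2 * real n * ?d) * ?E)"
  proof -
    have "real (bad n k) \<le> real (2 * n + 1) * real (n + 1) * real ((2 * n) choose n) * ?E" by (rule bad_bound[OF n])
    also have "\<dots> \<le> real (2 * n + 1) * real (n + 1) * (2 * real n * ?d) * ?E"
      by (intro mult_right_mono mult_left_mono c) auto
    finally show ?thesis by (intro add_left_mono mult_left_mono) auto
  qed
  finally have a: "real_of_int (AA n n) \<le> real n * real k * ?d + real n * real n * (real (2 * n + 1) * real (n + 1) * (2 * real n * ?d) * ?E)" .
  have "real n ^ 2 * ?d > 0" using dpos n by simp
  then have "real_of_int (AA n n) / (real n ^ 2 * ?d) \<le> (real n * real k * ?d + real n * real n * (real (2 * n + 1) * real (n + 1) * (2 * real n * ?d) * ?E)) / (real n ^ 2 * ?d)"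
    using a by (simp add: divide_right_mono)
  also have "\<dots> = real k / real n + 2 * real n * (2 * real n + 1) * (real n + 1) * ?E"
  proof -
    have nz: "real n \<noteq> 0" "?d \<noteq> 0" using n dpos by auto
    have e1: "real n * real k * ?d / (real n ^ 2 * ?d) = real k / real n"
      using nz by (simp add: power2_eq_square)
    have e2: "real n * real n * (real (2 * n + 1) * real (n + 1) * (2 * real n * ?d) * ?E) / (real n ^ 2 * ?d)
        = 2 * real n * (2 * real n + 1) * (real n + 1) * ?E"
      using nz by (simp add: power2_eq_square add.commute)
    show ?thesis unfolding add_divide_distrib e1 e2 ..
  qed
  finally show ?thesis .
qed

lemma ratio_tendsto:
  "(\<lambda>n. real_of_int (AA n n) / (real n ^ 2 * real (card (DP n)))) \<longlonglongrightarrow> 0"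
proof (rule LIMSEQ_I)
  fix e :: real assume e: "e > 0"
  define eps where "eps = e / 2"
  have eps: "eps > 0" using e by (simp add: eps_def)
  define c where "c = eps ^ 2 / 2"
  have c: "c > 0" using eps by (simp add: c_def)
  have lim: "(\<lambda>n. 1 / real n + 2 * real n * (2 * real n + 1) * (real n + 1) * exp (- c * real n)) \<longlonglongrightarrow> 0"
    using c by real_asymp
  then obtain N where N: "\<And>n. n \<ge> N \<Longrightarrow> norm (1 / real n + 2 * real n * (2 * real n + 1) * (real n + 1) * exp (- c * real n) - 0) < eps"
    using LIMSEQ_D[OF lim eps] by blast
  show "\<exists>N. \<forall>n\<ge>N. norm (real_of_int (AA n n) / (real n ^ 2 * real (card (DP n))) - 0) < e"
  proof (intro exI[of _ "max N 1"] allI impI)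
    fix n assume nN: "n \<ge> max N 1"
    then have n: "n \<ge> 1" by simp
    define k where "k = nat (ceiling (eps * real n))"
    have en: "0 \<le> eps * real n" using eps by simp
    have kk: "real k = real_of_int (ceiling (eps * real n))" unfolding k_def using en by simp
    have k1: "real k \<le> eps * real n + 1" unfolding kk by (rule of_int_ceiling_le_add_one)
    have k2: "eps * real n \<le> real k" unfolding kk by (rule le_of_int_ceiling)
    have "real k / real n \<le> (eps * real n + 1) / real n" using k1 n by (intro divide_right_mono) auto
    also have "\<dots> = eps + 1 / real n" using n by (simp add: add_divide_distrib)
    finally have kn: "real k / real n \<le> eps + 1 / real n" .
    have ex0: "exp (- (real k ^ 2) / (2 * real n)) \<le> exp (- c * real n)"
    proof -
      have "(eps * real n) ^ 2 \<le> real k ^ 2" using k2 eps by (intro power_mono) auto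
      then have "(eps * real n) ^ 2 / (2 * real n) \<le> real k ^ 2 / (2 * real n)" using n by (intro divide_right_mono) auto
      moreover have "(eps * real n) ^ 2 / (2 * real n) = c * real n" using n unfolding c_def by (simp add: power2_eq_square)
      ultimately have "c * real n \<le> real k ^ 2 / (2 * real n)" by simp
      then show ?thesis by simp
    qed
    have P0: "0 \<le> 2 * real n * (2 * real n + 1) * (real n + 1)" by simp
    have ex1: "2 * real n * (2 * real n + 1) * (real n + 1) * exp (- (real k ^ 2) / (2 * real n))
       \<le> 2 * real n * (2 * real n + 1) * (real n + 1) * exp (- c * real n)"
      by (rule mult_left_mono[OF ex0 P0])
    have r: "real_of_int (AA n n) / (real n ^ 2 * real (card (DP n)))
        \<le> eps + (1 / real n + 2 * real n * (2 * real n + 1) * (real n + 1) * exp (- c * real n))"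
      using ratio_bound[OF n, of k] kn ex1 by linarith
    have "0 \<le> AA n n" using AA_nonneg by simp
    then have nn: "0 \<le> real_of_int (AA n n) / (real n ^ 2 * real (card (DP n)))" by simp
    have "1 / real n + 2 * real n * (2 * real n + 1) * (real n + 1) * exp (- c * real n) < eps" using N[of n] nN by simp
    then show "norm (real_of_int (AA n n) / (real n ^ 2 * real (card (DP n))) - 0) < e"
      using r nn unfolding eps_def by simp
  qed
qed

lemma g_zero: "m = 0 \<or> m > n \<Longrightarrow> g (2 * n) m = 0"
  by (auto simp: g_formula)

lemma Gtot_pos: "n \<ge> 1 \<Longrightarrow> Gtot (2 * n) > 0"
proof -
  assume n: "n \<ge> 1"
  have a: "g (2 * n) 1 = (\<Sum>v\<in>DP n. Suc (sel v 0))" using n by (simp add: g_formula)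
  have b: "(\<Sum>v\<in>DP n. (1::nat)) \<le> (\<Sum>v\<in>DP n. Suc (sel v 0))" by (intro sum_mono) simp
  have c: "(\<Sum>v\<in>DP n. (1::nat)) > 0" using DP_pos[OF n] by simp
  have "g (2 * n) 1 > 0" using a b c by linarith
  moreover have "g (2 * n) 1 \<le> Gtot (2 * n)" unfolding Gtot_formula using n
    by (intro member_le_sum) auto
  ultimately show ?thesis by simp
qed

lemma probX_zero: "m > n \<Longrightarrow> probX n m = 0"
  by (simp add: probX_def g_zero)

lemma probX_nonneg: "probX n m \<ge> 0"
  by (simp add: probX_def)

lemma probX_sum: "n \<ge> 1 \<Longrightarrow> (\<Sum>m\<le>n. probX n m) = 1"
proof -
  assume n: "n \<ge> 1"
  have "(\<Sum>m\<le>n. probX n m) = real (Gtot (2 * n)) / real (Gtot (2 * n))"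
    unfolding Gtot_formula probX_def sum_divide_distrib[symmetric] by simp
  also have "\<dots> = 1" using Gtot_pos[OF n] by simp
  finally show ?thesis .
qed

lemma emeasure_law:
  assumes n: "n \<ge> 1" and A: "A \<in> sets borel"
  shows "emeasure (law_scaled n) A = ennreal (\<Sum>m\<in>{m. m \<le> n \<and> real m / real n \<in> A}. probX n m)"
proof -
  have "emeasure (law_scaled n) A =
      emeasure (density (count_space UNIV) (\<lambda>m. ennreal (probX n m))) ((\<lambda>m::nat. real m / real n) -` A)"
    unfolding law_scaled_def using A by (subst emeasure_distr) auto
  also have "\<dots> = (\<integral>\<^sup>+ m. ennreal (probX n m) * indicator ((\<lambda>m::nat. real m / real n) -` A) m \<partial>count_space UNIV)"
    by (subst emeasure_density) auto
  also have "\<dots> = (\<Sum>m\<le>n. ennreal (probX n m) * indicator ((\<lambda>m::nat. real m / real n) -` A) m)"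
    by (rule nn_integral_count_space') (auto simp: probX_zero)
  also have "\<dots> = (\<Sum>m\<in>{m. m \<le> n \<and> real m / real n \<in> A}. ennreal (probX n m))"
  proof -
    have "{m. m \<le> n \<and> real m / real n \<in> A} = {..n} \<inter> {m. real m / real n \<in> A}" by auto
    then show ?thesis by (simp add: sum.inter_restrict indicator_def if_distrib cong: if_cong)
  qed
  also have "\<dots> = ennreal (\<Sum>m\<in>{m. m \<le> n \<and> real m / real n \<in> A}. probX n m)"
    by (rule sum_ennreal) (simp add: probX_nonneg)
  finally show ?thesis .
qed

lemma law_prob: "n \<ge> 1 \<Longrightarrow> prob_space (law_scaled n)"
proof (rule prob_spaceI)
  assume n: "n \<ge> 1"
  have sp: "space (law_scaled n) = UNIV" by (simp add: law_scaled_def)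
  have "{m. m \<le> n \<and> real m / real n \<in> (UNIV::real set)} = {..n}" by auto
  then show "emeasure (law_scaled n) (space (law_scaled n)) = 1"
    unfolding sp using emeasure_law[OF n, of UNIV] probX_sum[OF n] by simp
qed

lemma law_real_dist: "n \<ge> 1 \<Longrightarrow> real_distribution (law_scaled n)"
  unfolding real_distribution_def real_distribution_axioms_def
  using law_prob by (simp add: law_scaled_def)

lemma cdf_law:
  assumes n: "n \<ge> 1"
  shows "cdf (law_scaled n) x = (\<Sum>m\<in>{m. m \<le> n \<and> real m / real n \<le> x}. probX n m)"
proof -
  have "cdf (law_scaled n) x = enn2real (emeasure (law_scaled n) {..x})" by (simp add: cdf_def measure_def)
  also have "\<dots> = (\<Sum>m\<in>{m. m \<le> n \<and> real m / real n \<le> x}. probX n m)"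
    using emeasure_law[OF n, of "{..x}"] by (simp add: sum_nonneg probX_nonneg)
  finally show ?thesis .
qed

definition clmp :: "real \<Rightarrow> real" where
  "clmp x = max 0 (min 1 x)"

lemma law_moment_clamp:
  assumes n: "n \<ge> 1"
  shows "integral\<^sup>L (law_scaled n) (\<lambda>x. x ^ r) = integral\<^sup>L (law_scaled n) (\<lambda>x. clmp x ^ r)"
proof -
  let ?M = "density (count_space UNIV) (\<lambda>m. ennreal (probX n m))"
  have "integral\<^sup>L (law_scaled n) (\<lambda>x. x ^ r) = integral\<^sup>L ?M (\<lambda>m. (real m / real n) ^ r)"
    unfolding law_scaled_def by (subst integral_distr) auto
  also have "\<dots> = integral\<^sup>L (count_space UNIV) (\<lambda>m. probX n m * (real m / real n) ^ r)"
    by (subst integral_density) (auto simp: probX_nonneg)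
  also have "\<dots> = integral\<^sup>L (count_space UNIV) (\<lambda>m. probX n m * clmp (real m / real n) ^ r)"
  proof (rule Bochner_Integration.integral_cong)
    fix m :: nat
    show "probX n m * (real m / real n) ^ r = probX n m * clmp (real m / real n) ^ r"
    proof (cases "m \<le> n")
      case True
      then have "real m / real n \<le> 1" using n by (simp add: divide_le_eq_1)
      then have "clmp (real m / real n) = real m / real n" by (simp add: clmp_def)
      then show ?thesis by simp
    next
      case False then show ?thesis by (simp add: probX_zero)
    qed
  qed simp
  also have "\<dots> = integral\<^sup>L ?M (\<lambda>m. clmp (real m / real n) ^ r)"
    by (subst integral_density) (auto simp: probX_nonneg)
  also have "\<dots> = integral\<^sup>L (law_scaled n) (\<lambda>x. clmp x ^ r)"
    unfolding law_scaled_def by (subst integral_distr) (auto simp: clmp_def)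
  finally show ?thesis .
qed

definition g21 :: "real \<Rightarrow> real" where
  "g21 x = 2 * x * indicator {0..1} x"

lemma g21_nonneg: "0 \<le> g21 x" by (simp add: g21_def indicator_def)

lemma g21_meas[measurable]: "g21 \<in> borel_measurable borel"
  unfolding g21_def by measurable

lemma beta21_eq: "beta21 = density lborel (\<lambda>x. ennreal (g21 x))"
  unfolding beta21_def
proof (intro arg_cong[where f = "density lborel"] ext)
  fix x :: real
  show "ennreal (2 * x) * indicator {0..1} x = ennreal (g21 x)"
    by (cases "x \<in> {0..1}") (auto simp: g21_def)
qed

lemma nn_tri:
  assumes a: "0 \<le> a"
  shows "(\<integral>\<^sup>+ t. ennreal (2 * t) * indicator {0..a} t \<partial>lborel) = ennreal (a ^ 2)"
proof -
  have "((\<lambda>t. 2 * t) has_integral ((\<lambda>t. t ^ 2) a - (\<lambda>t. t ^ 2) 0)) {0..a}"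
  proof (rule fundamental_theorem_of_calculus)
    show "0 \<le> a" by (rule a)
    fix x :: real assume "x \<in> {0..a}"
    have "((\<lambda>t. t ^ 2) has_real_derivative 2 * x) (at x within {0..a})"
      by (auto intro!: derivative_eq_intros)
    then show "((\<lambda>t. t ^ 2) has_vector_derivative 2 * x) (at x within {0..a})"
      by (simp add: has_real_derivative_iff_has_vector_derivative)
  qed
  then have "((\<lambda>t. 2 * t) has_integral a ^ 2) {0..a}" by simp
  from nn_integral_has_integral_lebesgue'[OF _ this] show ?thesis by simp
qed

lemma emeasure_beta_le:
  "emeasure beta21 {..x} = ennreal (if x < 0 then 0 else (min x 1) ^ 2)"
proof -
  have "emeasure beta21 {..x} = (\<integral>\<^sup>+ t. ennreal (g21 t) * indicator {..x} t \<partial>lborel)"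
    unfolding beta21_eq by (subst emeasure_density) auto
  also have "\<dots> = ennreal (if x < 0 then 0 else (min x 1) ^ 2)"
  proof (cases "x < 0")
    case True
    have "(\<integral>\<^sup>+ t. ennreal (g21 t) * indicator {..x} t \<partial>lborel) = (\<integral>\<^sup>+ t. 0 \<partial>lborel)"
    proof -
      have "(\<lambda>t. ennreal (g21 t) * indicator {..x} t) = (\<lambda>t. 0)"
        using True by (auto simp: g21_def indicator_def)
      then show ?thesis by simp
    qed
    then show ?thesis using True by simp
  next
    case False
    have "(\<integral>\<^sup>+ t. ennreal (g21 t) * indicator {..x} t \<partial>lborel)
        = (\<integral>\<^sup>+ t. ennreal (2 * t) * indicator {0..min x 1} t \<partial>lborel)"
      by (intro nn_integral_cong) (auto simp: g21_def indicator_def)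
    also have "\<dots> = ennreal ((min x 1) ^ 2)" using False by (intro nn_tri) simp
    finally show ?thesis using False by simp
  qed
  finally show ?thesis .
qed

lemma beta_prob: "prob_space beta21"
proof (rule prob_spaceI)
  have "emeasure beta21 UNIV = (\<integral>\<^sup>+ t. ennreal (2 * t) * indicator {0..1} t \<partial>lborel)"
    unfolding beta21_def by (subst emeasure_density) auto
  also have "\<dots> = 1" using nn_tri[of 1] by simp
  finally show "emeasure beta21 (space beta21) = 1" by (simp add: beta21_def)
qed

lemma beta_real_dist: "real_distribution beta21"
  unfolding real_distribution_def real_distribution_axioms_def
  using beta_prob by (simp add: beta21_def)

lemma cdf_beta: "cdf beta21 x = (if x < 0 then 0 else (min x 1) ^ 2)"
  unfolding cdf_def measure_def using emeasure_beta_le[of x] by simp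

lemma integral_beta: "h \<in> borel_measurable borel \<Longrightarrow> integral\<^sup>L beta21 h = integral\<^sup>L lborel (\<lambda>x. g21 x * h x)"
  unfolding beta21_eq by (subst integral_density) (auto simp: g21_nonneg)

lemma beta_moment: "integral\<^sup>L beta21 (\<lambda>x. x ^ r) = 2 / (real r + 2)"
proof -
  have "integral\<^sup>L beta21 (\<lambda>x. x ^ r) = integral\<^sup>L lborel (\<lambda>x. g21 x * x ^ r)"
    by (rule integral_beta) simp
  also have "\<dots> = integral\<^sup>L lborel (\<lambda>x. indicator {0..1} x *\<^sub>R (2 * x ^ (r + 1)))"
    by (intro Bochner_Integration.integral_cong) (auto simp: g21_def indicator_def)
  also have "\<dots> = 2 * 1 ^ (r + 2) / (real r + 2) - 2 * 0 ^ (r + 2) / (real r + 2)"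
  proof (rule integral_FTC_atLeastAtMost[where F = "\<lambda>x. 2 * x ^ (r + 2) / (real r + 2)"])
    fix x :: real
    have d0: "((\<lambda>x. x) has_real_derivative 1) (at x within {0..1})" by (rule DERIV_ident)
    have d1: "((\<lambda>x. x ^ (Suc (r + 1))) has_real_derivative (1 + real (r + 1)) * (1 * x ^ (r + 1))) (at x within {0..1})"
      by (rule DERIV_power_Suc[OF d0])
    have d2: "((\<lambda>x. 2 * x ^ (Suc (r + 1)) / (real r + 2)) has_real_derivative 2 * ((1 + real (r + 1)) * (1 * x ^ (r + 1))) / (real r + 2)) (at x within {0..1})"
      by (intro DERIV_cdivide DERIV_cmult d1)
    have e: "2 * ((1 + real (r + 1)) * (1 * x ^ (r + 1))) / (real r + 2) = 2 * x ^ (r + 1)"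
    proof -
      have "1 + real (r + 1) = real r + 2" by simp
      moreover have "real r + 2 \<noteq> 0" using of_nat_0_le_iff[of r] by linarith
      ultimately show ?thesis by (simp add: field_simps)
    qed
    have "((\<lambda>x. 2 * x ^ (r + 2) / (real r + 2)) has_real_derivative 2 * x ^ (r + 1)) (at x within {0..1})"
      using d2 unfolding e by (simp add: numeral_2_eq_2)
    then show "((\<lambda>x. 2 * x ^ (r + 2) / (real r + 2)) has_vector_derivative 2 * x ^ (r + 1)) (at x within {0..1})"
      by (simp add: has_real_derivative_iff_has_vector_derivative)
  qed (auto intro!: continuous_intros)
  also have "\<dots> = 2 / (real r + 2)" by simp
  finally show ?thesis .
qed

lemma beta_moment_clamp: "integral\<^sup>L beta21 (\<lambda>x. x ^ r) = integral\<^sup>L beta21 (\<lambda>x. clmp x ^ r)"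
proof -
  have "integral\<^sup>L beta21 (\<lambda>x. x ^ r) = integral\<^sup>L lborel (\<lambda>x. g21 x * x ^ r)"
    by (rule integral_beta) simp
  also have "\<dots> = integral\<^sup>L lborel (\<lambda>x. g21 x * clmp x ^ r)"
    by (intro Bochner_Integration.integral_cong) (auto simp: g21_def indicator_def clmp_def)
  also have "\<dots> = integral\<^sup>L beta21 (\<lambda>x. clmp x ^ r)"
    by (rule integral_beta[symmetric]) (simp add: clmp_def)
  finally show ?thesis .
qed

lemma div_div_same: "(c::real) \<noteq> 0 \<Longrightarrow> (a / c) / (b / c) = a / b"
  by (cases "b = 0") (simp_all add: field_simps)

lemma cdf_mid:
  assumes N: "N \<ge> 1" and M: "M \<le> N"
  shows "(\<Sum>m\<le>M. probX N m) =
    ((real M / real N) ^ 2 - real_of_int (AA N M) / (real N ^ 2 * real (card (DP N))))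
    / (1 - real_of_int (AA N N) / (real N ^ 2 * real (card (DP N))))"
proof -
  let ?d = "real (card (DP N))"
  have d: "?d > 0" using DP_pos[OF N] by simp
  have Nd: "real N ^ 2 * ?d > 0" using d N by simp
  have s1: "real (\<Sum>m\<le>M. g (2 * N) m) = real M ^ 2 * ?d - real_of_int (AA N M)"
    using arg_cong[OF S_formula[OF M], of real_of_int] by simp
  have s2: "real (Gtot (2 * N)) = real N ^ 2 * ?d - real_of_int (AA N N)"
    using arg_cong[OF S_formula[of N N], of real_of_int] by (simp add: Gtot_formula)
  have G: "real (Gtot (2 * N)) > 0" using Gtot_pos[OF N] by simp
  have "(\<Sum>m\<le>M. probX N m) = real (\<Sum>m\<le>M. g (2 * N) m) / real (Gtot (2 * N))"
    unfolding probX_def sum_divide_distrib[symmetric] by simp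
  also have "\<dots> = (real M ^ 2 * ?d - real_of_int (AA N M)) / (real N ^ 2 * ?d - real_of_int (AA N N))"
    using s1 s2 by simp
  also have "\<dots> = ((real M ^ 2 * ?d - real_of_int (AA N M)) / (real N ^ 2 * ?d))
       / ((real N ^ 2 * ?d - real_of_int (AA N N)) / (real N ^ 2 * ?d))"
    using Nd by (simp only: div_div_same[of "real N ^ 2 * ?d"] less_irrefl)
  also have "\<dots> = ((real M / real N) ^ 2 - real_of_int (AA N M) / (real N ^ 2 * ?d))
    / (1 - real_of_int (AA N N) / (real N ^ 2 * ?d))"
  proof -
    have "(real M ^ 2 * ?d - real_of_int (AA N M)) / (real N ^ 2 * ?d) = (real M / real N) ^ 2 - real_of_int (AA N M) / (real N ^ 2 * ?d)"
      using Nd d by (simp add: diff_divide_distrib power_divide)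
    moreover have "(real N ^ 2 * ?d - real_of_int (AA N N)) / (real N ^ 2 * ?d) = 1 - real_of_int (AA N N) / (real N ^ 2 * ?d)"
      using Nd d N by (simp add: diff_divide_distrib)
    ultimately show ?thesis by simp
  qed
  finally show ?thesis .
qed

lemma cdf_conv: "(\<lambda>n. cdf (law_scaled (Suc n)) x) \<longlonglongrightarrow> cdf beta21 x"
proof -
  consider "x < 0" | "x \<ge> 1" | "0 \<le> x \<and> x < 1" by linarith
  then show ?thesis
  proof cases
    case 1
    have "cdf (law_scaled (Suc n)) x = 0" for n
    proof -
      have e: "{m. m \<le> Suc n \<and> real m / real (Suc n) \<le> x} = {}" using 1
        by (auto simp: not_le) (smt (verit) divide_nonneg_nonneg of_nat_0_le_iff)
      moreover have "cdf (law_scaled (Suc n)) x = (\<Sum>m\<in>{m. m \<le> Suc n \<and> real m / real (Suc n) \<le> x}. probX (Suc n) m)"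
        by (rule cdf_law) simp
      then show ?thesis unfolding e by simp
    qed
    then show ?thesis using 1 by (simp add: cdf_beta)
  next
    case 2
    have "cdf (law_scaled (Suc n)) x = 1" for n
    proof -
      have "{m. m \<le> Suc n \<and> real m / real (Suc n) \<le> x} = {..Suc n}"
      proof (intro set_eqI iffI)
        fix m assume "m \<in> {..Suc n}"
        then have "real m / real (Suc n) \<le> 1" by (simp add: divide_le_eq_1)
        then have "real m / real (Suc n) \<le> x" using 2 by linarith
        then show "m \<in> {m. m \<le> Suc n \<and> real m / real (Suc n) \<le> x}" using \<open>m \<in> {..Suc n}\<close> by simp
      qed auto
      moreover have "cdf (law_scaled (Suc n)) x = (\<Sum>m\<in>{m. m \<le> Suc n \<and> real m / real (Suc n) \<le> x}. probX (Suc n) m)"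
        by (rule cdf_law) simp
      ultimately show ?thesis using probX_sum[of "Suc n"] by simp
    qed
    then show ?thesis using 2 by (simp add: cdf_beta)
  next
    case 3
    define N where "N n = Suc n" for n
    define M where "M n = nat (floor (x * real (N n)))" for n
    define a where "a n = real_of_int (AA (N n) (N n)) / (real (N n) ^ 2 * real (card (DP (N n))))" for n
    define b where "b n = real_of_int (AA (N n) (M n)) / (real (N n) ^ 2 * real (card (DP (N n))))" for n
    have MN: "M n \<le> N n" for n
    proof -
      have "x * real (N n) \<le> real (N n)" using 3 by (simp add: N_def)
      then have "floor (x * real (N n)) \<le> int (N n)" by (simp add: floor_le_iff) 
      then show ?thesis unfolding M_def by simp
    qed
    have set_eq: "{m. m \<le> N n \<and> real m / real (N n) \<le> x} = {..M n}" for n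
    proof (intro set_eqI)
      fix m
      have "real m / real (N n) \<le> x \<longleftrightarrow> real m \<le> x * real (N n)" by (simp add: N_def divide_le_eq)
      also have "\<dots> \<longleftrightarrow> int m \<le> floor (x * real (N n))" by (simp add: le_floor_iff)
      also have "\<dots> \<longleftrightarrow> m \<le> M n" unfolding M_def using 3 by (simp add: le_nat_iff)
      finally show "m \<in> {m. m \<le> N n \<and> real m / real (N n) \<le> x} \<longleftrightarrow> m \<in> {..M n}" using MN[of n] by auto
    qed
    have cdf_eq: "cdf (law_scaled (Suc n)) x = ((real (M n) / real (N n)) ^ 2 - b n) / (1 - a n)" for n
    proof -
      have "cdf (law_scaled (Suc n)) x = (\<Sum>m\<le>M n. probX (N n) m)"
        using set_eq[of n] by (simp add: cdf_law N_def)
      also have "\<dots> = ((real (M n) / real (N n)) ^ 2 - b n) / (1 - a n)"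
        unfolding a_def b_def by (rule cdf_mid) (use MN[of n] in \<open>auto simp: N_def\<close>)
      finally show ?thesis .
    qed
    have a0: "a \<longlonglongrightarrow> 0"
      unfolding a_def N_def using ratio_tendsto by (rule LIMSEQ_Suc)
    have b0: "b \<longlonglongrightarrow> 0"
    proof (rule tendsto_sandwich[of "\<lambda>n. 0" _ _ a])
      show "\<forall>\<^sub>F n in sequentially. 0 \<le> b n"
        unfolding b_def using AA_nonneg MN by (intro always_eventually allI divide_nonneg_nonneg) auto
      show "\<forall>\<^sub>F n in sequentially. b n \<le> a n"
        unfolding a_def b_def using AA_mono MN
        by (intro always_eventually allI divide_right_mono) auto
    qed (auto simp: a0)
    have MN_lim: "(\<lambda>n. real (M n) / real (N n)) \<longlonglongrightarrow> x"
    proof (rule tendsto_sandwich[of "\<lambda>n. x - 1 / real (N n)" _ _ "\<lambda>n. x"])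
      have Mr: "real (M n) = real_of_int (floor (x * real (N n)))" for n
        unfolding M_def using 3 by simp
      show "\<forall>\<^sub>F n in sequentially. x - 1 / real (N n) \<le> real (M n) / real (N n)"
      proof (intro always_eventually allI)
        fix n
        have "x * real (N n) - 1 \<le> real (M n)" unfolding Mr by linarith
        then have "(x * real (N n) - 1) / real (N n) \<le> real (M n) / real (N n)" by (intro divide_right_mono) auto
        then show "x - 1 / real (N n) \<le> real (M n) / real (N n)" by (simp add: N_def diff_divide_distrib)
      qed
      show "\<forall>\<^sub>F n in sequentially. real (M n) / real (N n) \<le> x"
      proof (intro always_eventually allI)
        fix n
        have "real (M n) \<le> x * real (N n)" unfolding Mr by linarith
        then show "real (M n) / real (N n) \<le> x" by (simp add: N_def divide_le_eq)
      qed
      have "(\<lambda>n. 1 / real (N n)) \<longlonglongrightarrow> 0" unfolding N_def by (rule LIMSEQ_Suc[OF lim_const_over_n])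
      then show "(\<lambda>n. x - 1 / real (N n)) \<longlonglongrightarrow> x" by (auto intro: tendsto_eq_intros)
    qed simp
    have "(\<lambda>n. ((real (M n) / real (N n)) ^ 2 - b n) / (1 - a n)) \<longlonglongrightarrow> (x ^ 2 - 0) / (1 - 0)"
      by (intro tendsto_intros MN_lim b0 a0) simp
    then show ?thesis using 3 by (simp add: cdf_eq cdf_beta)
  qed
qed

lemma clamp_cont: "isCont (\<lambda>x. clmp x ^ r) x"
  unfolding clmp_def by (intro continuous_intros)

lemma clamp_bound: "norm (clmp x ^ r) \<le> 1"
proof -
  have c: "0 \<le> clmp x" "clmp x \<le> 1" by (auto simp: clmp_def)
  then have "norm (clmp x ^ r) = clmp x ^ r" by simp
  then show ?thesis using power_le_one[OF c] by simp
qed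

theorem theorem16:
  shows "(\<forall>n\<ge>1. prob_space (law_scaled n))
    \<and> prob_space beta21
    \<and> weak_conv_m (\<lambda>n. law_scaled (Suc n)) beta21
    \<and> (\<forall>r::nat. (\<lambda>n. integral\<^sup>L (law_scaled (Suc n)) (\<lambda>x. x ^ r))
                   \<longlonglongrightarrow> integral\<^sup>L beta21 (\<lambda>x. x ^ r))
    \<and> (\<forall>r::nat. integral\<^sup>L beta21 (\<lambda>x. x ^ r) = 2 / (real r + 2))"
proof (intro conjI allI impI)
  show "prob_space (law_scaled n)" if "n \<ge> 1" for n using law_prob that by simp
  show "prob_space beta21" by (rule beta_prob)
  show wc: "weak_conv_m (\<lambda>n. law_scaled (Suc n)) beta21"
    unfolding weak_conv_m_def weak_conv_def using cdf_conv by blast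
  show "integral\<^sup>L beta21 (\<lambda>x. x ^ r) = 2 / (real r + 2)" for r by (rule beta_moment)
  fix r :: nat
  have "(\<lambda>n. integral\<^sup>L (law_scaled (Suc n)) (\<lambda>x. clmp x ^ r)) \<longlonglongrightarrow> integral\<^sup>L beta21 (\<lambda>x. clmp x ^ r)"
    by (rule weak_conv_imp_integral_bdd_continuous_conv[OF _ beta_real_dist wc clamp_cont clamp_bound])
       (simp add: law_real_dist)
  then show "(\<lambda>n. integral\<^sup>L (law_scaled (Suc n)) (\<lambda>x. x ^ r)) \<longlonglongrightarrow> integral\<^sup>L beta21 (\<lambda>x. x ^ r)"
    by (simp add: law_moment_clamp beta_moment_clamp)
qed

end
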